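(* Let $n\geq1$, $\beta>0$, and let $f(\xi)\in\mathbb{Z}_p[\xi_1,\ldots,\xi_n]$ be an elliptic polynomial of degree $d$. Let $A=\{\xi\in\mathbb{Z}_p^n: |\xi_i|_p=1\text{ for some }i\}$ and let $M$ be a positive integer such that $|f(\xi)|_p\geq p^{-M}$ for all $\xi\in A$. For $t>0$ and $x\in\mathbb{Q}_p^n$ put $Z_0(x,t)=\int_{\mathbb{Z}_p^n}\Psi(x\cdot\xi)e^{-t|f(\xi)|_p^{\beta}}\,d\xi$. Then there exist constants $R>0$ and $C>0$ such that whenever $\|x\|_p\geq R$, $t>0$ and $p^{(M+1)d\beta}\,t\,\|x\|_p^{-d\beta}\leq1$, one has \[ |Z_0(x,t)|\leq C\,t\,\|x\|_p^{-d\beta-n}. \]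
   Context: $\mathbb{Q}_p$ is the field of $p$-adic numbers, $\mathbb{Z}_p$ its ring of integers, $|\cdot|_p$ the $p$-adic absolute value, $\|x\|_p=\max_i|x_i|_p$. $d\xi$ is the Haar measure on $\mathbb{Q}_p^n$ with $\mathbb{Z}_p^n$ of measure $1$. $\Psi$ is the standard additive character of $\mathbb{Q}_p$, $\Psi(a)=\exp(2\pi i\{a\}_p)$ where $\{a\}_p$ is the fractional part of $a$, and $x\cdot\xi=\sum_i x_i\xi_i$. A polynomial $f\in\mathbb{Q}_p[\xi_1,\dots,\xi_n]$ is elliptic of degree $d$ if it is a non-constant homogeneous polynomial of degree $d$ and $f(\xi)=0\iff\xi=0$. *)

theory Defs
  imports "HOL-Probability.Probability"
begin

text \<open>p-adic integers as compatible residue sequences: a k = (a mod p^k) in {0..<p^k}.\<close>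
definition Zp :: "nat \<Rightarrow> (nat \<Rightarrow> nat) set" where
  "Zp p = {a. \<forall>k. a k < p ^ k \<and> a k = a (Suc k) mod p ^ k}"

definition padic_val :: "nat \<Rightarrow> (nat \<Rightarrow> nat) \<Rightarrow> nat" where
  "padic_val p a = (LEAST k. a (Suc k) \<noteq> 0)"

definition padic_abs :: "nat \<Rightarrow> (nat \<Rightarrow> nat) \<Rightarrow> real" where
  "padic_abs p a = (if a = (\<lambda>k. 0) then 0 else 1 / real p ^ padic_val p a)"

definition zp_norm :: "nat \<Rightarrow> nat \<Rightarrow> (nat \<Rightarrow> nat \<Rightarrow> nat) \<Rightarrow> real" where
  "zp_norm p n y = Max ((\<lambda>i. padic_abs p (y i)) ` {..<n})"

definition zp_dot :: "nat \<Rightarrow> nat \<Rightarrow> (nat \<Rightarrow> nat \<Rightarrow> nat) \<Rightarrow> (nat \<Rightarrow> nat \<Rightarrow> nat) \<Rightarrow> nat \<Rightarrow> nat" where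
  "zp_dot p n y xi = (\<lambda>k. (\<Sum>i<n. y i k * xi i k) mod p ^ k)"

definition zp_poly_eval :: "nat \<Rightarrow> nat \<Rightarrow> (nat \<Rightarrow> nat) set \<Rightarrow> ((nat \<Rightarrow> nat) \<Rightarrow> nat \<Rightarrow> nat)
    \<Rightarrow> (nat \<Rightarrow> nat \<Rightarrow> nat) \<Rightarrow> nat \<Rightarrow> nat" where
  "zp_poly_eval p n S c xi = (\<lambda>k. (\<Sum>\<alpha>\<in>S. c \<alpha> k * (\<Prod>i<n. xi i k ^ \<alpha> i)) mod p ^ k)"

text \<open>Haar measure on Zp: image of i.i.d. uniform digits; on Zp^n: product measure.\<close>
definition digit_space :: "nat \<Rightarrow> (nat \<Rightarrow> nat) measure" where
  "digit_space p = PiM UNIV (\<lambda>_::nat. uniform_measure (count_space UNIV) {..<p})"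

definition zp_of_digits :: "nat \<Rightarrow> (nat \<Rightarrow> nat) \<Rightarrow> nat \<Rightarrow> nat" where
  "zp_of_digits p d = (\<lambda>k. \<Sum>j<k. d j * p ^ j)"

definition zp_haar :: "nat \<Rightarrow> (nat \<Rightarrow> nat) measure" where
  "zp_haar p = distr (digit_space p) (PiM UNIV (\<lambda>_::nat. count_space UNIV)) (zp_of_digits p)"

definition zpn_haar :: "nat \<Rightarrow> nat \<Rightarrow> (nat \<Rightarrow> nat \<Rightarrow> nat) measure" where
  "zpn_haar p n = PiM {..<n} (\<lambda>_. zp_haar p)"

text \<open>A point x of Q_p^n is represented as x = p^(-m) * y with m :: nat and y in Zp^n
  (every x in Q_p^n has such a representation). Then ||x||_p = p^m * ||y||_p and, for
  xi in Zp^n, {x . xi}_p = ((y . xi) mod p^m) / p^m, so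
  Psi(x . xi) = exp(2 pi i ((y . xi) mod p^m) / p^m).\<close>
definition Psi_rep :: "nat \<Rightarrow> nat \<Rightarrow> nat \<Rightarrow> (nat \<Rightarrow> nat \<Rightarrow> nat) \<Rightarrow> (nat \<Rightarrow> nat \<Rightarrow> nat) \<Rightarrow> complex" where
  "Psi_rep p n m y xi = cis (2 * pi * real (zp_dot p n y xi m) / real p ^ m)"

definition qp_norm_rep :: "nat \<Rightarrow> nat \<Rightarrow> nat \<Rightarrow> (nat \<Rightarrow> nat \<Rightarrow> nat) \<Rightarrow> real" where
  "qp_norm_rep p n m y = real p ^ m * zp_norm p n y"

definition Z0 :: "nat \<Rightarrow> nat \<Rightarrow> (nat \<Rightarrow> nat) set \<Rightarrow> ((nat \<Rightarrow> nat) \<Rightarrow> nat \<Rightarrow> nat) \<Rightarrow> real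
    \<Rightarrow> nat \<Rightarrow> (nat \<Rightarrow> nat \<Rightarrow> nat) \<Rightarrow> real \<Rightarrow> complex" where
  "Z0 p n S c \<beta> m y t = (LINT xi | zpn_haar p n.
      Psi_rep p n m y xi * complex_of_real (exp (- t * padic_abs p (zp_poly_eval p n S c xi) powr \<beta>)))"

end

theory Submission
  imports Defs
begin


lemma distr_PiM_gen:
  assumes M: "\<And>i. i \<in> I \<Longrightarrow> prob_space (M i)"
    and f[measurable]: "\<And>i. i \<in> I \<Longrightarrow> f i \<in> measurable (M i) (N i)"
  shows "distr (PiM I M) (PiM I N) (\<lambda>x. \<lambda>i\<in>I. f i (x i)) = PiM I (\<lambda>i. distr (M i) (N i) (f i))"
proof (rule measure_eqI_PiM_infinite[symmetric, where M=N])
  show "sets (PiM I (\<lambda>i. distr (M i) (N i) (f i))) = sets (PiM I N)"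
    by (intro sets_PiM_cong) auto
  show "sets (distr (PiM I M) (PiM I N) (\<lambda>x. \<lambda>i\<in>I. f i (x i))) = sets (PiM I N)" by simp
  have P: "\<And>i. i \<in> I \<Longrightarrow> prob_space (distr (M i) (N i) (f i))"
    using M f by (simp add: prob_space.prob_space_distr)
  then interpret prob_space "PiM I (\<lambda>i. distr (M i) (N i) (f i))"
    by (intro prob_space_PiM) auto
  show "finite_measure (PiM I (\<lambda>i. distr (M i) (N i) (f i)))" by unfold_locales
  fix A J assume J: "finite J" "J \<subseteq> I" and A: "\<And>i. i \<in> J \<Longrightarrow> A i \<in> sets (N i)"
  have pe: "prod_emb I N J (Pi\<^sub>E J A) = prod_emb I (\<lambda>i. distr (M i) (N i) (f i)) J (Pi\<^sub>E J A)"
    by (simp add: prod_emb_def)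
  have "emeasure (PiM I (\<lambda>i. distr (M i) (N i) (f i))) (prod_emb I N J (Pi\<^sub>E J A))
     = (\<Prod>i\<in>J. emeasure (distr (M i) (N i) (f i)) (A i))"
    unfolding pe using J A P by (intro emeasure_PiM_emb) auto
  also have "\<dots> = (\<Prod>i\<in>J. emeasure (M i) (f i -` A i \<inter> space (M i)))"
    using J A by (intro prod.cong refl emeasure_distr) auto
  also have "\<dots> = emeasure (PiM I M) (prod_emb I M J (Pi\<^sub>E J (\<lambda>i. f i -` A i \<inter> space (M i))))"
    using J A M by (intro emeasure_PiM_emb[symmetric]) auto
  also have "prod_emb I M J (Pi\<^sub>E J (\<lambda>i. f i -` A i \<inter> space (M i)))
     = (\<lambda>x. \<lambda>i\<in>I. f i (x i)) -` prod_emb I N J (Pi\<^sub>E J A) \<inter> space (PiM I M)"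
  proof -
    have fs: "\<And>i y. i \<in> I \<Longrightarrow> y \<in> space (M i) \<Longrightarrow> f i y \<in> space (N i)"
      using f by (meson measurable_space)
    show ?thesis
      using J fs by (auto simp: prod_emb_def space_PiM PiE_iff Pi_iff subset_iff)
  qed
  also have "emeasure (PiM I M) \<dots> = emeasure (distr (PiM I M) (PiM I N) (\<lambda>x. \<lambda>i\<in>I. f i (x i))) (prod_emb I N J (Pi\<^sub>E J A))"
    using J A by (intro emeasure_distr[symmetric] sets_PiM_I) auto
  finally show "emeasure (PiM I (\<lambda>i. distr (M i) (N i) (f i))) (prod_emb I N J (Pi\<^sub>E J A)) = 
     emeasure (distr (PiM I M) (PiM I N) (\<lambda>x. \<lambda>i\<in>I. f i (x i))) (prod_emb I N J (Pi\<^sub>E J A))" .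
qed



lemma zp_lt: "a \<in> Zp p \<Longrightarrow> a k < p ^ k"
  unfolding Zp_def by blast

lemma zp_step: "a \<in> Zp p \<Longrightarrow> a k = a (Suc k) mod p ^ k"
  unfolding Zp_def by blast

lemma Zp_intro: "(\<And>k. a k < p ^ k) \<Longrightarrow> (\<And>k. a k = a (Suc k) mod p ^ k) \<Longrightarrow> a \<in> Zp p"
  unfolding Zp_def by blast

lemma sum_mod_cong2:
  assumes "\<And>x. x \<in> A \<Longrightarrow> f x mod m = g x mod (m::nat)"
  shows "sum f A mod m = sum g A mod m"
proof -
  have "sum f A mod m = (\<Sum>x\<in>A. f x mod m) mod m" by (rule mod_sum_eq[symmetric])
  also have "(\<Sum>x\<in>A. f x mod m) = (\<Sum>x\<in>A. g x mod m)" using assms by (rule sum.cong[OF refl])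
  also have "(\<Sum>x\<in>A. g x mod m) mod m = sum g A mod m" by (rule mod_sum_eq)
  finally show ?thesis .
qed

lemma prod_mod_cong2:
  assumes "\<And>x. x \<in> A \<Longrightarrow> f x mod m = g x mod (m::nat)"
  shows "prod f A mod m = prod g A mod m"
proof -
  have "prod f A mod m = (\<Prod>x\<in>A. f x mod m) mod m" by (rule mod_prod_eq[symmetric])
  also have "(\<Prod>x\<in>A. f x mod m) = (\<Prod>x\<in>A. g x mod m)" using assms by (rule prod.cong[OF refl])
  also have "(\<Prod>x\<in>A. g x mod m) mod m = prod g A mod m" by (rule mod_prod_eq)
  finally show ?thesis .
qed

lemma pow_mod_cong: "a mod m = b mod (m::nat) \<Longrightarrow> a ^ k mod m = b ^ k mod m"
  by (metis power_mod)

lemma poly_mod_cong: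
  assumes "\<And>\<alpha>. \<alpha> \<in> S \<Longrightarrow> c \<alpha> mod m = c' \<alpha> mod (m::nat)"
    and "\<And>i. i < n \<Longrightarrow> x i mod m = x' i mod m"
  shows "(\<Sum>\<alpha>\<in>S. c \<alpha> * (\<Prod>i<n. x i ^ \<alpha> i)) mod m = (\<Sum>\<alpha>\<in>S. c' \<alpha> * (\<Prod>i<n. x' i ^ \<alpha> i)) mod m"
  using assms by (intro sum_mod_cong2 mod_mult_cong prod_mod_cong2 pow_mod_cong) auto

lemma zp_mod_le:
  assumes "a \<in> Zp p" "k \<le> K"
  shows "a k = a K mod p ^ k"
  using assms(2)
proof (induction K)
  case 0 then show ?case using zp_lt[OF assms(1), of 0] by simp
next
  case (Suc K)
  show ?case
  proof (cases "k = Suc K")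
    case True
    have "a (Suc K) < p ^ Suc K" using zp_lt[OF assms(1)] .
    then show ?thesis using True by simp
  next
    case False
    then have "k \<le> K" using Suc by simp
    then have "a k = a K mod p ^ k" using Suc by simp
    also have "a K = a (Suc K) mod p ^ K" using zp_step[OF assms(1)] .
    also have "a (Suc K) mod p ^ K mod p ^ k = a (Suc K) mod p ^ k"
      using \<open>k \<le> K\<close> by (simp add: mod_mod_cancel le_imp_power_dvd)
    finally show ?thesis .
  qed
qed

lemma zp_zero0: "a \<in> Zp p \<Longrightarrow> a 0 = 0"
  using zp_lt[of a p 0] by simp

lemma padic_abs_upper:
  assumes "a \<in> Zp p" "a K = 0" "p > 1"
  shows "padic_abs p a \<le> 1 / real p ^ K"
proof (cases "a = (\<lambda>k. 0)")
  case True then show ?thesis by (simp add: padic_abs_def)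
next
  case False
  then obtain k where k: "a k \<noteq> 0" by auto
  then have "k \<noteq> 0" by (metis zp_zero0[OF assms(1)])
  then obtain k' where "k = Suc k'" using not0_implies_Suc by blast
  then have ex: "\<exists>k. a (Suc k) \<noteq> 0" using k by blast
  have "a (Suc (padic_val p a)) \<noteq> 0" unfolding padic_val_def by (rule LeastI_ex[OF ex])
  moreover have "Suc j \<le> K \<Longrightarrow> a (Suc j) = 0" for j
    using zp_mod_le[OF assms(1), of "Suc j" K] assms(2) by simp
  ultimately have "K \<le> padic_val p a" by (meson not_less_eq_eq)
  then have "real p ^ K \<le> real p ^ padic_val p a" using assms(3) by (simp add: power_increasing)
  then show ?thesis using False assms(3) by (simp add: padic_abs_def frac_le)
qed

lemma Least_eq_upto:
  fixes P Q :: "nat \<Rightarrow> bool"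
  assumes "\<forall>k<N. P k = Q k" "P k0" "k0 < N"
  shows "(LEAST k. P k) = (LEAST k. Q k)"
proof -
  have l1: "(LEAST k. P k) \<le> k0" by (rule Least_le[of P, OF assms(2)])
  have P1: "P (LEAST k. P k)" by (rule LeastI[of P, OF assms(2)])
  then have q1: "Q (LEAST k. P k)" using assms l1 by auto
  then have l2: "(LEAST k. Q k) \<le> (LEAST k. P k)" by (rule Least_le[of Q])
  have "Q (LEAST k. Q k)" by (rule LeastI[of Q, OF q1])
  then have "P (LEAST k. Q k)" using assms l1 l2 by auto
  then have "(LEAST k. P k) \<le> (LEAST k. Q k)" by (rule Least_le[of P])
  with l2 show ?thesis by simp
qed

lemma padic_abs_eq:
  assumes "a \<in> Zp p" "b \<in> Zp p" "a N = b N" "a N \<noteq> 0"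
  shows "padic_abs p a = padic_abs p b"
proof -
  have "N \<noteq> 0" using assms zp_zero0 by metis
  then obtain N' where N': "N = Suc N'" using not0_implies_Suc by blast
  have eq: "\<forall>k<N. a (Suc k) = b (Suc k)"
  proof (intro allI impI)
    fix k assume k: "k < N"
    have e1: "a (Suc k) = a N mod p ^ Suc k" using k by (intro zp_mod_le[OF assms(1)]) simp
    have e2: "b (Suc k) = b N mod p ^ Suc k" using k by (intro zp_mod_le[OF assms(2)]) simp
    show "a (Suc k) = b (Suc k)" using e1 e2 assms(3) by metis
  qed
  have "padic_val p a = padic_val p b" unfolding padic_val_def
    by (rule Least_eq_upto[of N _ _ N']) (use eq assms N' in auto)
  moreover have "a \<noteq> (\<lambda>k. 0)" "b \<noteq> (\<lambda>k. 0)" using assms by auto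
  ultimately show ?thesis by (simp add: padic_abs_def)
qed

lemma poly_Zp:
  assumes "p > 0" "\<forall>\<alpha>\<in>S. c \<alpha> \<in> Zp p" "\<forall>i<n. xi i \<in> Zp p"
  shows "zp_poly_eval p n S c xi \<in> Zp p"
proof -
  have step: "(\<Sum>\<alpha>\<in>S. c \<alpha> (Suc k) * (\<Prod>i<n. xi i (Suc k) ^ \<alpha> i)) mod p ^ k =
        (\<Sum>\<alpha>\<in>S. c \<alpha> k * (\<Prod>i<n. xi i k ^ \<alpha> i)) mod p ^ k" for k
  proof -
    have c: "\<alpha> \<in> S \<Longrightarrow> c \<alpha> (Suc k) mod p ^ k = c \<alpha> k" for \<alpha>
      using assms(2) zp_step by metis
    have x: "i < n \<Longrightarrow> xi i (Suc k) mod p ^ k = xi i k" for i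
      using assms(3) zp_step by metis
    have cl: "\<alpha> \<in> S \<Longrightarrow> c \<alpha> k < p ^ k" for \<alpha> using assms(2) zp_lt by blast
    have xl: "i < n \<Longrightarrow> xi i k < p ^ k" for i using assms(3) zp_lt by blast
    show ?thesis using c x cl xl by (intro poly_mod_cong) auto
  qed
  show ?thesis
  proof (intro Zp_intro)
    fix k
    show "zp_poly_eval p n S c xi k < p ^ k" using assms(1) by (simp add: zp_poly_eval_def)
    have "p ^ k dvd p ^ Suc k" by (simp add: le_imp_power_dvd)
    then show "zp_poly_eval p n S c xi k = zp_poly_eval p n S c xi (Suc k) mod p ^ k"
      unfolding zp_poly_eval_def using step[of k] by (simp add: mod_mod_cancel)
  qed
qed

lemma mono_cong:
  fixes a a' b :: "nat \<Rightarrow> nat"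
  assumes "\<forall>i<n. a i = p^j * a' i" "\<forall>i<n. a' i mod p^K = b i mod p^K" "(\<Sum>i<n. \<alpha> i) = d"
  shows "(\<Prod>i<n. a i ^ \<alpha> i) mod p^(d*j+K) = (p^(d*j) * (\<Prod>i<n. b i ^ \<alpha> i)) mod p^(d*j+K)"
proof -
  have "(\<Prod>i<n. a i ^ \<alpha> i) = (\<Prod>i<n. p^(j * \<alpha> i) * a' i ^ \<alpha> i)"
    using assms(1) by (simp add: power_mult_distrib power_mult)
  also have "\<dots> = p^(d*j) * (\<Prod>i<n. a' i ^ \<alpha> i)"
    by (simp add: prod.distrib power_sum[symmetric] sum_distrib_left[symmetric] assms(3) mult.commute)
  finally have e: "(\<Prod>i<n. a i ^ \<alpha> i) = p^(d*j) * (\<Prod>i<n. a' i ^ \<alpha> i)" .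
  have "(\<Prod>i<n. a' i ^ \<alpha> i) mod p^K = (\<Prod>i<n. b i ^ \<alpha> i) mod p^K"
    using assms(2) by (intro prod_mod_cong2 pow_mod_cong) auto
  then show ?thesis unfolding e power_add mod_mult_mult1 by simp
qed

lemma sum_mod_cong:
  fixes A B :: "'a \<Rightarrow> nat"
  assumes "\<And>x. x \<in> S \<Longrightarrow> A x mod m = B x mod m"
  shows "(\<Sum>x\<in>S. c x * A x) mod m = (\<Sum>x\<in>S. c x * B x) mod m"
  using assms by (intro sum_mod_cong2 mod_mult_cong) auto

lemma zp_dvd_from:
  assumes "a \<in> Zp p" "a j = 0" "j \<le> k"
  shows "p ^ j dvd a k"
  using zp_mod_le[OF assms(1,3)] assms(2) by (simp add: mod_eq_0_iff_dvd)

lemma key: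
  fixes p n d M J q i1 :: nat and xi xi' :: "nat \<Rightarrow> nat \<Rightarrow> nat"
  assumes p1: "p > 1"
    and coeffs: "\<forall>\<alpha>\<in>S. c \<alpha> \<in> Zp p"
    and homog: "\<forall>\<alpha>\<in>S. (\<Sum>i<n. \<alpha> i) = d" and d1: "d \<ge> 1"
    and lowerA: "\<forall>xi. (\<forall>i<n. xi i \<in> Zp p) \<and> (\<exists>i<n. padic_abs p (xi i) = 1) \<longrightarrow>
        padic_abs p (zp_poly_eval p n S c xi) \<ge> 1 / real p ^ M"
    and xi: "\<forall>i<n. xi i \<in> Zp p" and xi': "\<forall>i<n. xi' i \<in> Zp p"
    and cg: "\<forall>i<n. \<forall>k. xi' i k mod p^q = xi i k mod p^q"
    and i1: "i1 < n" "xi i1 J \<noteq> 0" and Jq: "J + M \<le> q"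
  shows "padic_abs p (zp_poly_eval p n S c xi') = padic_abs p (zp_poly_eval p n S c xi)"
proof -
  have p0: "p > 0" using p1 by simp
  have "J \<noteq> 0" using i1 xi zp_zero0 by metis
  then obtain J' where J': "J = Suc J'" using not0_implies_Suc by blast
  have ex: "\<exists>i<n. xi i (Suc J') \<noteq> 0" using i1 J' by auto
  define j where "j = (LEAST k. \<exists>i<n. xi i (Suc k) \<noteq> 0)"
  have "j \<le> J'" unfolding j_def by (rule Least_le) (rule ex)
  then have jJ: "j < J" using J' by simp
  have "\<exists>i<n. xi i (Suc j) \<noteq> 0" unfolding j_def by (rule LeastI) (rule ex)
  then obtain i2 where i2: "i2 < n" "xi i2 (Suc j) \<noteq> 0" by blast
  have j0: "xi i j = 0" if "i < n" for i
  proof (cases j)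
    case 0 then show ?thesis using zp_zero0 xi that by auto
  next
    case (Suc k)
    have "k < j" using Suc by simp
    then have "\<not> (\<exists>i<n. xi i (Suc k) \<noteq> 0)" unfolding j_def by (rule not_less_Least)
    then show ?thesis using that Suc by auto
  qed
  define K where "K = Suc M"
  define N where "N = d * j + K"
  have jKq: "j + K \<le> q" using jJ Jq by (simp add: K_def)
  have "j \<le> d * j" using d1 by simp
  then have jKN: "j + K \<le> N" by (simp add: N_def)
  have pjq: "p ^ j dvd p ^ q" using jKq by (simp add: le_imp_power_dvd)
  have dv: "p ^ j dvd xi i k" if "i < n" "j \<le> k" for i k
    using zp_dvd_from[of "xi i" p j k] xi j0 that by auto
  have dv': "p ^ j dvd xi' i k" if "i < n" "j \<le> k" for i k
  proof -
    have "xi' i k mod p ^ j = (xi' i k mod p^q) mod p^j" using pjq by (simp add: mod_mod_cancel)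
    also have "\<dots> = (xi i k mod p^q) mod p^j" using cg that by simp
    also have "\<dots> = xi i k mod p^j" using pjq by (simp add: mod_mod_cancel)
    also have "\<dots> = 0" using dv[OF that] by simp
    finally show ?thesis by (simp add: mod_eq_0_iff_dvd)
  qed
  define z where "z i = xi i N div p ^ j" for i
  define z' where "z' i = xi' i N div p ^ j" for i
  have xz: "\<forall>i<n. xi i N = p ^ j * z i" using dv jKN unfolding z_def by simp
  have xz': "\<forall>i<n. xi' i N = p ^ j * z' i" using dv' jKN unfolding z'_def by simp
  have pjpos: "p ^ j > 0" using p0 by simp
  have zz: "\<forall>i<n. z' i mod p ^ K = z i mod p ^ K"
  proof (intro allI impI)
    fix i assume i: "i < n"
    have pd: "p ^ (j + K) dvd p ^ q" using jKq by (simp add: le_imp_power_dvd)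
    have "xi' i N mod p ^ (j+K) = (xi' i N mod p ^ q) mod p ^ (j+K)" using pd by (simp add: mod_mod_cancel)
    also have "\<dots> = (xi i N mod p ^ q) mod p ^ (j+K)" using cg i by simp
    also have "\<dots> = xi i N mod p ^ (j + K)" using pd by (simp add: mod_mod_cancel)
    finally have "xi' i N mod p ^ (j+K) = xi i N mod p ^ (j + K)" .
    then have "p ^ j * (z' i mod p ^ K) = p ^ j * (z i mod p ^ K)"
      using xz xz' i by (simp add: mod_mult_mult1 power_add)
    then show "z' i mod p ^ K = z i mod p ^ K" using p0 by auto
  qed
  define eta where "eta i k = xi i (k + j) div p ^ j" for i k
  have etaK: "\<forall>i<n. z i mod p ^ K = eta i K mod p ^ K"
  proof (intro allI impI)
    fix i assume i: "i < n"
    have "xi i (K + j) = xi i N mod p ^ (K + j)"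
      using zp_mod_le[of "xi i" p "K + j" N] xi i jKN by (simp add: add.commute)
    also have "\<dots> = p ^ j * (z i mod p ^ K)" using xz i by (simp add: mod_mult_mult1 power_add mult.commute)
    finally have "eta i K = z i mod p ^ K" unfolding eta_def using pjpos by simp
    then show "z i mod p ^ K = eta i K mod p ^ K" by simp
  qed
  have eta_Zp: "\<forall>i<n. eta i \<in> Zp p"
  proof (intro allI impI)
    fix i assume i: "i < n"
    have "eta i k < p ^ k" for k
    proof -
      have "xi i (k + j) < p ^ (k + j)" using xi i zp_lt by blast
      then show ?thesis unfolding eta_def using pjpos
        by (simp add: power_add less_mult_imp_div_less)
    qed
    moreover have "eta i k = eta i (Suc k) mod p ^ k" for k
    proof -
      obtain w where w: "xi i (Suc k + j) = p ^ j * w" using dv[OF i, of "Suc k + j"] by auto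
      have "xi i (k + j) = xi i (Suc k + j) mod p ^ (j + k)"
        using zp_step[of "xi i" p "k + j"] xi i by (metis add.commute add_Suc)
      also have "\<dots> = p ^ j * (w mod p ^ k)" using w by (simp add: mod_mult_mult1 power_add)
      finally show ?thesis unfolding eta_def using w pjpos by simp
    qed
    ultimately show "eta i \<in> Zp p" by (intro Zp_intro)
  qed
  have eta_unit: "padic_abs p (eta i2) = 1"
  proof -
    obtain w where w: "xi i2 (Suc j) = p ^ j * w" using dv[OF i2(1), of "Suc j"] by auto
    have "eta i2 (Suc 0) = w" unfolding eta_def using w pjpos by simp
    then have e1: "eta i2 (Suc 0) \<noteq> 0" using w i2 by auto
    then have "padic_val p (eta i2) = 0" unfolding padic_val_def by (intro Least_eq_0) 
    moreover have "eta i2 \<noteq> (\<lambda>k. 0)" using e1 by auto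
    ultimately show ?thesis by (simp add: padic_abs_def)
  qed
  have fZp: "zp_poly_eval p n S c eta \<in> Zp p" using poly_Zp[OF p0 coeffs eta_Zp] .
  have "padic_abs p (zp_poly_eval p n S c eta) \<ge> 1 / real p ^ M"
    using lowerA eta_Zp eta_unit i2 by blast
  then have fK: "zp_poly_eval p n S c eta K \<noteq> 0"
  proof (intro notI)
    assume h: "zp_poly_eval p n S c eta K = 0"
    have "padic_abs p (zp_poly_eval p n S c eta) \<le> 1 / real p ^ K"
      by (rule padic_abs_upper[OF fZp h p1])
    moreover have "1 / real p ^ K < 1 / real p ^ M" using p1 by (simp add: K_def frac_less2)
    ultimately show False using \<open>1 / real p ^ M \<le> _\<close> by simp
  qed
  define Y where "Y = (\<Sum>\<alpha>\<in>S. c \<alpha> K * (\<Prod>i<n. eta i K ^ \<alpha> i))"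
  have Y0: "Y mod p ^ K \<noteq> 0" using fK by (simp add: Y_def zp_poly_eval_def)
  define X where "X = (\<Sum>\<alpha>\<in>S. c \<alpha> N * (\<Prod>i<n. xi i N ^ \<alpha> i))"
  define X' where "X' = (\<Sum>\<alpha>\<in>S. c \<alpha> N * (\<Prod>i<n. xi' i N ^ \<alpha> i))"
  have m1: "(\<Prod>i<n. xi i N ^ \<alpha> i) mod p ^ N = (p^(d*j) * (\<Prod>i<n. eta i K ^ \<alpha> i)) mod p ^ N"
    if "\<alpha> \<in> S" for \<alpha>
    unfolding N_def using homog that xz etaK by (intro mono_cong) (auto simp: N_def)
  have m2: "(\<Prod>i<n. xi' i N ^ \<alpha> i) mod p ^ N = (p^(d*j) * (\<Prod>i<n. z i ^ \<alpha> i)) mod p ^ N"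
    if "\<alpha> \<in> S" for \<alpha>
    unfolding N_def using homog that xz' zz by (intro mono_cong) (auto simp: N_def)
  have m3: "(\<Prod>i<n. xi i N ^ \<alpha> i) mod p ^ N = (p^(d*j) * (\<Prod>i<n. z i ^ \<alpha> i)) mod p ^ N"
    if "\<alpha> \<in> S" for \<alpha>
    unfolding N_def using homog that xz by (intro mono_cong) (auto simp: N_def)
  have XX: "X' mod p ^ N = X mod p ^ N"
    unfolding X_def X'_def using m2 m3 by (intro sum_mod_cong) auto
  have "X mod p ^ N = (\<Sum>\<alpha>\<in>S. c \<alpha> N * (p^(d*j) * (\<Prod>i<n. eta i K ^ \<alpha> i))) mod p ^ N"
    unfolding X_def using m1 by (intro sum_mod_cong) auto
  also have "\<dots> = (p^(d*j) * (\<Sum>\<alpha>\<in>S. c \<alpha> N * (\<Prod>i<n. eta i K ^ \<alpha> i))) mod (p^(d*j) * p ^ K)"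
    by (simp add: N_def power_add sum_distrib_left mult.left_commute)
  also have "\<dots> = p^(d*j) * ((\<Sum>\<alpha>\<in>S. c \<alpha> N * (\<Prod>i<n. eta i K ^ \<alpha> i)) mod p ^ K)"
    by (rule mod_mult_mult1)
  also have "(\<Sum>\<alpha>\<in>S. c \<alpha> N * (\<Prod>i<n. eta i K ^ \<alpha> i)) mod p ^ K = Y mod p ^ K"
  proof -
    show ?thesis unfolding Y_def
    proof (intro poly_mod_cong)
      fix \<alpha> assume a: "\<alpha> \<in> S"
      have "c \<alpha> K = c \<alpha> N mod p ^ K" using coeffs a jKN by (intro zp_mod_le) auto
      then show "c \<alpha> N mod p ^ K = c \<alpha> K mod p ^ K" by simp
    qed simp
  qed
  finally have XY: "X mod p ^ N = p^(d*j) * (Y mod p ^ K)" .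
  have fx: "zp_poly_eval p n S c xi N = X mod p ^ N" by (simp add: zp_poly_eval_def X_def)
  have fx': "zp_poly_eval p n S c xi' N = X' mod p ^ N" by (simp add: zp_poly_eval_def X'_def)
  show ?thesis
  proof (rule padic_abs_eq[where N=N])
    show "zp_poly_eval p n S c xi' \<in> Zp p" using poly_Zp[OF p0 coeffs xi'] .
    show "zp_poly_eval p n S c xi \<in> Zp p" using poly_Zp[OF p0 coeffs xi] .
    show "zp_poly_eval p n S c xi' N = zp_poly_eval p n S c xi N" using fx fx' XX by simp
    show "zp_poly_eval p n S c xi' N \<noteq> 0" using fx fx' XX XY Y0 p0 by simp
  qed
qed

lemma ball_bound:
  assumes p1: "p > 1" and coeffs: "\<forall>\<alpha>\<in>S. c \<alpha> \<in> Zp p"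
    and homog: "\<forall>\<alpha>\<in>S. (\<Sum>i<n. \<alpha> i) = d" and d1: "d \<ge> 1"
    and xi: "\<forall>i<n. xi i \<in> Zp p" and z: "\<forall>i<n. xi i J = 0"
  shows "padic_abs p (zp_poly_eval p n S c xi) \<le> 1 / real p ^ (d * J)"
proof (rule padic_abs_upper)
  show "zp_poly_eval p n S c xi \<in> Zp p" using poly_Zp p1 coeffs xi by simp
  show "p > 1" by fact
  have "J \<le> d * J" using d1 by simp
  then have dv: "\<forall>i<n. xi i (d * J) = p ^ J * (xi i (d * J) div p ^ J)"
    using zp_dvd_from xi z by simp
  have m: "(\<Prod>i<n. xi i (d*J) ^ \<alpha> i) mod p ^ (d*J) = 0 mod p ^ (d*J)" if "\<alpha> \<in> S" for \<alpha>
  proof -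
    have "(\<Prod>i<n. xi i (d*J) ^ \<alpha> i) mod p ^ (d*J+0) =
       (p^(d*J) * (\<Prod>i<n. (xi i (d * J) div p ^ J) ^ \<alpha> i)) mod p ^ (d*J+0)"
      using homog that dv by (intro mono_cong) auto
    then show ?thesis by simp
  qed
  have "(\<Sum>\<alpha>\<in>S. c \<alpha> (d*J) * (\<Prod>i<n. xi i (d*J) ^ \<alpha> i)) mod p ^ (d*J)
      = (\<Sum>\<alpha>\<in>S. c \<alpha> (d*J) * 0) mod p ^ (d*J)"
    using m by (intro sum_mod_cong) auto
  then show "zp_poly_eval p n S c xi (d * J) = 0" by (simp add: zp_poly_eval_def)
qed

lemma zod_lt:
  assumes "\<forall>j. e j < p"
  shows "zp_of_digits p e k < p ^ k"
proof (induction k)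
  case 0 then show ?case by (simp add: zp_of_digits_def)
next
  case (Suc k)
  have "zp_of_digits p e (Suc k) = zp_of_digits p e k + e k * p ^ k"
    by (simp add: zp_of_digits_def)
  also have "\<dots> < p ^ k + e k * p ^ k" using Suc by simp
  also have "\<dots> = (e k + 1) * p ^ k" by simp
  also have "\<dots> \<le> p * p ^ k" using assms by (intro mult_right_mono) (auto simp: Suc_le_eq)
  finally show ?case by simp
qed

lemma zod_Zp:
  assumes "\<forall>j. e j < p"
  shows "zp_of_digits p e \<in> Zp p"
proof -
  have "zp_of_digits p e k = zp_of_digits p e (Suc k) mod p ^ k" for k
  proof -
    have "zp_of_digits p e (Suc k) = zp_of_digits p e k + e k * p ^ k"
      by (simp add: zp_of_digits_def)
    then show ?thesis using zod_lt[OF assms, of k] by simp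
  qed
  then show ?thesis using zod_lt[OF assms] by (intro Zp_intro)
qed

lemma zod_upd_le:
  "k \<le> q \<Longrightarrow> zp_of_digits p (e(q := w)) k = zp_of_digits p e k"
  unfolding zp_of_digits_def by (intro sum.cong) auto

lemma zod_upd_gt:
  assumes "q < k"
  shows "zp_of_digits p (e(q := w)) k + e q * p ^ q = zp_of_digits p e k + w * p ^ q"
proof -
  have q: "q \<in> {..<k}" using assms by simp
  have s1: "(\<Sum>j\<in>{..<k} - {q}. (e(q:=w)) j * p ^ j) = (\<Sum>j\<in>{..<k} - {q}. e j * p ^ j)"
    by (intro sum.cong) auto
  have "zp_of_digits p (e(q := w)) k = (e(q:=w)) q * p ^ q + (\<Sum>j\<in>{..<k} - {q}. (e(q:=w)) j * p ^ j)"
    unfolding zp_of_digits_def by (rule sum.remove[OF _ q]) simp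
  then have "zp_of_digits p (e(q := w)) k = w * p ^ q + (\<Sum>j\<in>{..<k} - {q}. e j * p ^ j)"
    using s1 by simp
  moreover have "zp_of_digits p e k = e q * p ^ q + (\<Sum>j\<in>{..<k} - {q}. e j * p ^ j)"
    unfolding zp_of_digits_def using q by (simp add: sum.remove)
  ultimately show ?thesis by simp
qed

lemma zod_upd_mod:
  "zp_of_digits p (e(q := w)) k mod p ^ q = zp_of_digits p e k mod p ^ q"
proof (cases "k \<le> q")
  case True then show ?thesis by (simp add: zod_upd_le)
next
  case False
  then have "zp_of_digits p (e(q := w)) k + e q * p ^ q = zp_of_digits p e k + w * p ^ q"
    by (intro zod_upd_gt) simp
  then have "(zp_of_digits p (e(q := w)) k + e q * p ^ q) mod p ^ q = (zp_of_digits p e k + w * p ^ q) mod p ^ q"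
    by simp
  then show ?thesis by simp
qed

lemma zod_zero:
  assumes "p > 0"
  shows "zp_of_digits p e J = 0 \<longleftrightarrow> (\<forall>j<J. e j = 0)"
  using assms by (auto simp: zp_of_digits_def)

lemma cis_int_period: "cis (x + 2 * pi * real_of_int k) = cis x"
proof -
  have "cis (x + 2 * pi * real_of_int k) = cis x * cis (2 * pi * real_of_int k)"
    by (simp only: cis_mult)
  also have "cis (2 * pi * real_of_int k) = 1" by (rule cis_multiple_2pi) simp
  finally show ?thesis by simp
qed

lemma psi_alt:
  assumes "p > 0"
  shows "Psi_rep p n m y xi = cis (2 * pi * (\<Sum>i<n. real (y i m) * real (xi i m)) / real p ^ m)"
proof -
  define T where "T = (\<Sum>i<n. y i m * xi i m)"
  have T: "real T = (\<Sum>i<n. real (y i m) * real (xi i m))" by (simp add: T_def)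
  have "real (T mod p ^ m) = real T - real (p ^ m) * real (T div p ^ m)"
    by (metis add_diff_cancel_left' div_mult_mod_eq mult.commute of_nat_add of_nat_mult)
  then have "2 * pi * real (T mod p ^ m) / real p ^ m = 2 * pi * (real T - real p ^ m * real (T div p ^ m)) / real p ^ m"
    by simp
  also have "\<dots> = 2 * pi * real T / real p ^ m + 2 * pi * real_of_int (- int (T div p ^ m))"
    using assms by (simp add: field_simps)
  finally have "2 * pi * real (T mod p ^ m) / real p ^ m = 2 * pi * real T / real p ^ m + 2 * pi * real_of_int (- int (T div p ^ m))" .
  then show ?thesis unfolding Psi_rep_def zp_dot_def T_def[symmetric] T[symmetric]
    by (simp only: cis_int_period)
qed



definition UU :: "nat \<Rightarrow> nat measure" where
  "UU p = uniform_measure (count_space UNIV) {..<p}"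

lemma D_def': "digit_space p = PiM UNIV (\<lambda>_. UU p)"
  by (simp add: digit_space_def UU_def)

lemma sets_UU[simp, measurable_cong]: "sets (UU p) = sets (count_space UNIV)"
  by (simp add: UU_def)

lemma space_UU[simp]: "space (UU p) = UNIV"
  by (simp add: UU_def)

lemma UU_meas_cs: "f \<in> measurable (UU p) (count_space UNIV)"
  by (subst measurable_cong_sets[OF sets_UU refl]) (rule measurable_count_space)

lemma UU_meas_borel: "f \<in> borel_measurable (UU p)"
  by (subst measurable_cong_sets[OF sets_UU refl]) simp

lemma UU_meas_UU: "f \<in> measurable (UU p) (UU p)"
  by (subst measurable_cong_sets[OF sets_UU sets_UU]) (rule measurable_count_space)

lemma prob_UU: "p > 0 \<Longrightarrow> prob_space (UU p)"
  unfolding UU_def by (rule prob_space_uniform_measure) auto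

lemma emeasure_UU: "p > 0 \<Longrightarrow> emeasure (UU p) A = ennreal (real (card ({..<p} \<inter> A)) / real p)"
  unfolding UU_def
  by (subst emeasure_uniform_measure) (auto simp: divide_ennreal ennreal_of_nat_eq_real_of_nat)

lemma shift_eq: "(z::nat) < p \<Longrightarrow> (z + 1) mod p = (if z + 1 < p then z + 1 else 0)"
proof (cases "z + 1 < p")
  case False
  assume "z < p"
  then have "z + 1 = p" using False by simp
  then show ?thesis by simp
qed simp

lemma distr_UU_shift:
  assumes "p > 0"
  shows "distr (UU p) (UU p) (\<lambda>z. (z + 1) mod p) = UU p"
proof (rule measure_eqI)
  show "sets (distr (UU p) (UU p) (\<lambda>z. (z + 1) mod p)) = sets (UU p)" by simp
  fix A assume "A \<in> sets (distr (UU p) (UU p) (\<lambda>z. (z + 1) mod p))"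
  let ?s = "\<lambda>z. (z + 1) mod p"
  have inj: "inj_on ?s {..<p}"
  proof (rule inj_onI)
    fix a b assume ab: "a \<in> {..<p}" "b \<in> {..<p}" "?s a = ?s b"
    show "a = b" using ab shift_eq[of a p] shift_eq[of b p] by (auto split: if_splits)
  qed
  have img: "?s ` ({..<p} \<inter> ?s -` A) = {..<p} \<inter> A"
  proof
    show "?s ` ({..<p} \<inter> ?s -` A) \<subseteq> {..<p} \<inter> A" using assms by auto
    show "{..<p} \<inter> A \<subseteq> ?s ` ({..<p} \<inter> ?s -` A)"
    proof
      fix a assume a: "a \<in> {..<p} \<inter> A"
      define x where "x = (if a = 0 then p - 1 else a - 1)"
      have "?s x = a"
      proof (cases "a = 0")
        case True
        then have "x + 1 = p" using assms by (simp add: x_def)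
        then show ?thesis using True by simp
      next
        case False
        then have "x + 1 = a" by (simp add: x_def)
        then show ?thesis using a by simp
      qed
      moreover have "x < p"
      proof (cases "a = 0")
        case True then show ?thesis using assms by (simp add: x_def)
      next
        case False then show ?thesis using a by (simp add: x_def less_imp_diff_less)
      qed
      ultimately have "x \<in> {..<p} \<inter> ?s -` A" using a by simp
      then show "a \<in> ?s ` ({..<p} \<inter> ?s -` A)" using \<open>?s x = a\<close> by (metis rev_image_eqI)
    qed
  qed
  have "card ({..<p} \<inter> ?s -` A) = card ({..<p} \<inter> A)"
    using card_image[OF inj_on_subset[OF inj, of "{..<p} \<inter> ?s -` A"]] img by auto
  then show "emeasure (distr (UU p) (UU p) ?s) A = emeasure (UU p) A"
    using assms by (simp add: emeasure_distr emeasure_UU)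
qed

lemma distr_UU_shift':
  assumes "p > 0"
  shows "distr (UU p) (UU p) (\<lambda>z. Suc z mod p) = UU p"
  using distr_UU_shift[OF assms] by simp

definition rot :: "nat \<Rightarrow> nat \<Rightarrow> (nat \<Rightarrow> nat) \<Rightarrow> nat \<Rightarrow> nat" where
  "rot p q = (\<lambda>e. \<lambda>j\<in>UNIV. (if j = q then (\<lambda>z. (z + 1) mod p) else (\<lambda>z. z)) (e j))"

lemma rot_eq: "rot p q e = e(q := (e q + 1) mod p)"
  by (auto simp: rot_def)

lemma prob_D: "p > 0 \<Longrightarrow> prob_space (digit_space p)"
  unfolding D_def' by (intro prob_space_PiM prob_UU)

lemma space_D[simp]: "space (digit_space p) = UNIV"
  by (simp add: D_def' space_PiM)

lemma comp_meas_D: "(\<lambda>e. h (e j)) \<in> measurable (digit_space p) (UU p)"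
proof -
  have "(\<lambda>e. e j) \<in> measurable (digit_space p) (UU p)"
    unfolding D_def' by (rule measurable_component_singleton) simp
  then show ?thesis
    using measurable_compose[of "\<lambda>e. e j" "digit_space p" "UU p" h "UU p"] UU_meas_UU by blast
qed

lemma rot_meas: "rot p q \<in> measurable (digit_space p) (digit_space p)"
proof -
  have "rot p q \<in> measurable (digit_space p) (PiM UNIV (\<lambda>_. UU p))"
    unfolding rot_def by (intro measurable_restrict comp_meas_D)
  then show ?thesis by (simp add: D_def')
qed

lemma distr_rot:
  assumes "p > 0"
  shows "distr (digit_space p) (digit_space p) (rot p q) = digit_space p"
proof -
  have "distr (digit_space p) (digit_space p) (rot p q) =
     PiM UNIV (\<lambda>j. distr (UU p) (UU p) (if j = q then (\<lambda>z. (z + 1) mod p) else (\<lambda>z. z)))"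
    unfolding rot_def D_def' by (rule distr_PiM_gen) (auto intro: prob_UU assms UU_meas_UU)
  also have "\<dots> = PiM UNIV (\<lambda>_. UU p)"
    by (intro PiM_cong refl) (auto simp: distr_UU_shift distr_UU_shift' assms)
  finally show ?thesis by (simp add: D_def')
qed

lemma zod_meas_k: "(\<lambda>e. zp_of_digits p e k) \<in> measurable (digit_space p) (count_space UNIV)"
proof (induction k)
  case 0 then show ?case by (simp add: zp_of_digits_def)
next
  case (Suc k)
  have "(\<lambda>e. v + e k * p ^ k) \<in> measurable (digit_space p) (count_space UNIV)" for v
  proof -
    have "(\<lambda>e. e k) \<in> measurable (digit_space p) (UU p)"
      unfolding D_def' by (rule measurable_component_singleton) simp
    moreover have "(\<lambda>z. v + z * p ^ k) \<in> measurable (UU p) (count_space UNIV)" by (rule UU_meas_cs)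
    ultimately show ?thesis
      using measurable_compose[of "\<lambda>e. e k" "digit_space p" "UU p" "\<lambda>z. v + z * p ^ k" "count_space UNIV"] by blast
  qed
  then have "(\<lambda>e. zp_of_digits p e k + e k * p ^ k) \<in> measurable (digit_space p) (count_space UNIV)"
    by (rule measurable_compose_countable[where f="\<lambda>v e. v + e k * p ^ k" and g="\<lambda>e. zp_of_digits p e k", OF _ Suc])
  moreover have "(\<lambda>e. zp_of_digits p e (Suc k)) = (\<lambda>e. zp_of_digits p e k + e k * p ^ k)"
    by (simp add: zp_of_digits_def)
  ultimately show ?case by simp
qed

lemma zod_meas: "zp_of_digits p \<in> measurable (digit_space p) (PiM UNIV (\<lambda>_::nat. count_space UNIV))"
proof -
  have "zp_of_digits p = (\<lambda>e. \<lambda>k\<in>UNIV. zp_of_digits p e k)" by (simp add: restrict_def)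
  also have "\<dots> \<in> measurable (digit_space p) (PiM UNIV (\<lambda>_::nat. count_space UNIV))"
    by (intro measurable_restrict zod_meas_k)
  finally show ?thesis .
qed

definition Dn :: "nat \<Rightarrow> nat \<Rightarrow> (nat \<Rightarrow> nat \<Rightarrow> nat) measure" where
  "Dn p n = PiM {..<n} (\<lambda>_. digit_space p)"

definition ZZ :: "nat \<Rightarrow> nat \<Rightarrow> (nat \<Rightarrow> nat \<Rightarrow> nat) \<Rightarrow> nat \<Rightarrow> nat \<Rightarrow> nat" where
  "ZZ p n = (\<lambda>x. \<lambda>i\<in>{..<n}. zp_of_digits p (x i))"

lemma prob_Dn: "p > 0 \<Longrightarrow> prob_space (Dn p n)"
  unfolding Dn_def by (intro prob_space_PiM prob_D)

lemma comp_Dn: "i < n \<Longrightarrow> (\<lambda>x. x i) \<in> measurable (Dn p n) (digit_space p)"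
  unfolding Dn_def by (rule measurable_component_singleton) simp

lemma ZZ_meas: "ZZ p n \<in> measurable (Dn p n) (PiM {..<n} (\<lambda>_. PiM UNIV (\<lambda>_::nat. count_space UNIV)))"
  unfolding ZZ_def
proof (intro measurable_restrict)
  fix i assume "i \<in> {..<n}"
  then have "(\<lambda>x. x i) \<in> measurable (Dn p n) (digit_space p)" by (intro comp_Dn) simp
  then show "(\<lambda>x. zp_of_digits p (x i)) \<in> measurable (Dn p n) (PiM UNIV (\<lambda>_::nat. count_space UNIV))"
    using zod_meas measurable_compose by blast
qed

lemma haar_distr:
  assumes "p > 0"
  shows "zpn_haar p n = distr (Dn p n) (PiM {..<n} (\<lambda>_. PiM UNIV (\<lambda>_::nat. count_space UNIV))) (ZZ p n)"
  unfolding zpn_haar_def zp_haar_def Dn_def ZZ_def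
  by (rule distr_PiM_gen[symmetric]) (auto intro: prob_D assms zod_meas)

definition RR :: "nat \<Rightarrow> nat \<Rightarrow> nat \<Rightarrow> nat \<Rightarrow> (nat \<Rightarrow> nat \<Rightarrow> nat) \<Rightarrow> nat \<Rightarrow> nat \<Rightarrow> nat" where
  "RR p n i0 q = (\<lambda>x. \<lambda>i\<in>{..<n}. (if i = i0 then rot p q else (\<lambda>z. z)) (x i))"

lemma RR_meas: "RR p n i0 q \<in> measurable (Dn p n) (Dn p n)"
proof -
  have "(\<lambda>x. (if i = i0 then rot p q else (\<lambda>z. z)) (x i)) \<in> measurable (Dn p n) (digit_space p)"
    if "i \<in> {..<n}" for i
  proof -
    have c: "(\<lambda>x. x i) \<in> measurable (Dn p n) (digit_space p)" using that by (intro comp_Dn) simp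
    show ?thesis
    proof (cases "i = i0")
      case True
      have "(\<lambda>x. rot p q (x i)) \<in> measurable (Dn p n) (digit_space p)"
        using c rot_meas measurable_compose by blast
      then show ?thesis using True by simp
    next
      case False then show ?thesis using c by simp
    qed
  qed
  then have "RR p n i0 q \<in> measurable (Dn p n) (PiM {..<n} (\<lambda>_. digit_space p))"
    unfolding RR_def by (rule measurable_restrict)
  then show ?thesis by (simp add: Dn_def)
qed

lemma distr_RR:
  assumes "p > 0"
  shows "distr (Dn p n) (Dn p n) (RR p n i0 q) = Dn p n"
proof -
  have "distr (Dn p n) (Dn p n) (RR p n i0 q) =
     PiM {..<n} (\<lambda>i. distr (digit_space p) (digit_space p) (if i = i0 then rot p q else (\<lambda>z. z)))"
    unfolding RR_def Dn_def by (rule distr_PiM_gen) (auto intro: prob_D assms rot_meas)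
  also have "\<dots> = Dn p n"
    unfolding Dn_def by (intro PiM_cong refl) (auto simp: distr_rot assms)
  finally show ?thesis .
qed

lemma AE_digits:
  assumes "p > 0"
  shows "AE x in Dn p n. \<forall>i<n. \<forall>j. x i j < p"
proof -
  have "AE e in digit_space p. e j < p" for j
  proof -
    have "AE z in UU p. z < p" unfolding UU_def by (rule AE_uniform_measureI) auto
    then show ?thesis unfolding D_def' by (intro AE_PiM_component prob_UU assms) auto
  qed
  then have a: "AE e in digit_space p. \<forall>j. e j < p" by (simp add: AE_all_countable)
  have "AE x in Dn p n. \<forall>i\<in>{..<n}. \<forall>j. x i j < p"
    unfolding Dn_def by (intro AE_finite_allI AE_PiM_component prob_D assms a) auto
  then show ?thesis by eventually_elim auto
qed

lemma real_digit_meas[measurable]: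
  "i < n \<Longrightarrow> (\<lambda>x. real (x i j)) \<in> borel_measurable (Dn p n)"
proof -
  assume i: "i < n"
  have c1: "(\<lambda>x. x i) \<in> measurable (Dn p n) (digit_space p)"
    unfolding Dn_def by (rule measurable_component_singleton) (use i in simp)
  have c2: "(\<lambda>e. e j) \<in> measurable (digit_space p) (UU p)"
    unfolding D_def' by (rule measurable_component_singleton) simp
  have c3: "real \<in> measurable (UU p) borel" by (rule UU_meas_borel)
  have c4: "(\<lambda>e. real (e j)) \<in> borel_measurable (digit_space p)"
    by (rule measurable_compose[OF c2 c3])
  show ?thesis by (rule measurable_compose[OF c1 c4])
qed

definition Bj :: "nat \<Rightarrow> nat \<Rightarrow> (nat \<Rightarrow> nat) set" where
  "Bj p J = prod_emb UNIV (\<lambda>_. UU p) {..<J} (Pi\<^sub>E {..<J} (\<lambda>_. {0}))"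

definition BB :: "nat \<Rightarrow> nat \<Rightarrow> nat \<Rightarrow> (nat \<Rightarrow> nat \<Rightarrow> nat) set" where
  "BB p n J = Pi\<^sub>E {..<n} (\<lambda>_. Bj p J)"

lemma Bj_iff: "e \<in> Bj p J \<longleftrightarrow> (\<forall>j<J. e j = 0)"
  by (auto simp: Bj_def prod_emb_def PiE_iff restrict_def fun_eq_iff)

lemma BB_iff: "x \<in> space (Dn p n) \<Longrightarrow> x \<in> BB p n J \<longleftrightarrow> (\<forall>i<n. \<forall>j<J. x i j = 0)"
  by (auto simp: BB_def Dn_def space_PiM PiE_iff Bj_iff)

lemma BB_sets: "BB p n J \<in> sets (Dn p n)"
  unfolding BB_def Dn_def Bj_def D_def'
  by (intro sets_PiM_I_finite sets_PiM_I) auto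

lemma Bj_sets: "Bj p J \<in> sets (digit_space p)"
  unfolding Bj_def D_def' by (intro sets_PiM_I) auto

lemma emeasure_BB:
  assumes "p > 0"
  shows "emeasure (Dn p n) (BB p n J) = ennreal ((1 / real p) ^ (n * J))"
proof -
  have u0: "emeasure (UU p) {0} = ennreal (1 / real p)"
    using assms by (simp add: emeasure_UU)
  have "emeasure (digit_space p) (Bj p J) = (\<Prod>j\<in>{..<J}. emeasure (UU p) {0})"
    unfolding D_def' Bj_def by (rule emeasure_PiM_emb) (auto intro: prob_UU assms)
  also have "\<dots> = ennreal ((1 / real p) ^ J)"
    using u0 by (simp add: prod_ennreal ennreal_power)
  finally have bj: "emeasure (digit_space p) (Bj p J) = ennreal ((1 / real p) ^ J)" .
  have "emeasure (Dn p n) (BB p n J) =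
     emeasure (Dn p n) (prod_emb {..<n} (\<lambda>_. digit_space p) {..<n} (Pi\<^sub>E {..<n} (\<lambda>_. Bj p J)))"
    by (simp add: BB_def)
  also have "\<dots> = (\<Prod>i\<in>{..<n}. emeasure (digit_space p) (Bj p J))"
    unfolding Dn_def by (rule emeasure_PiM_emb) (auto intro: prob_D assms Bj_sets)
  also have "\<dots> = ennreal ((1 / real p) ^ (n * J))"
    using bj by (simp add: prod_ennreal ennreal_power power_mult[symmetric] mult.commute)
  finally show ?thesis .
qed



lemma zz_i: "i < n \<Longrightarrow> ZZ p n x i = zp_of_digits p (x i)"
  by (simp add: ZZ_def)

lemma RR_i: "i < n \<Longrightarrow> RR p n i0 q x i = (if i = i0 then (x i)(q := (x i q + 1) mod p) else x i)"
  by (simp add: RR_def rot_eq)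

lemma real_zod: "real (zp_of_digits p e k) = (\<Sum>j<k. real (e j) * real p ^ j)"
  by (simp add: zp_of_digits_def)

lemma psi_meas:
  assumes "p > 0"
  shows "(\<lambda>x. Psi_rep p n m y (ZZ p n x)) \<in> borel_measurable (Dn p n)"
proof -
  have eq: "(\<lambda>x. Psi_rep p n m y (ZZ p n x)) = (\<lambda>x. cis (2 * pi * (\<Sum>i<n. real (y i m) * (\<Sum>j<m. real (x i j) * real p ^ j)) / real p ^ m))"
  proof -
    have "(\<Sum>i<n. real (y i m) * real (ZZ p n x i m)) = (\<Sum>i<n. real (y i m) * (\<Sum>j<m. real (x i j) * real p ^ j))" for x
      by (intro sum.cong refl) (simp add: zz_i real_zod)
    then show ?thesis using assms by (simp add: psi_alt)
  qed
  have "(\<lambda>x. (\<Sum>i<n. real (y i m) * (\<Sum>j<m. real (x i j) * real p ^ j))) \<in> borel_measurable (Dn p n)"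
    by (intro borel_measurable_sum borel_measurable_times measurable_const real_digit_meas) auto
  then show ?thesis unfolding eq cis_conv_exp by measurable
qed

lemma psi_shift:
  assumes p0: "p > 0" and i0: "i0 < n" and qm: "q < m" and good: "\<forall>i<n. \<forall>j. x i j < p"
    and ya: "y i0 m = p ^ v * aa" and vq: "v + q + 1 = m"
  shows "Psi_rep p n m y (ZZ p n (RR p n i0 q x)) = Psi_rep p n m y (ZZ p n x) * cis (2 * pi * real aa / real p)"
proof -
  define e where "e = x i0"
  define s where "s = (e q + 1) mod p"
  define \<delta> where "\<delta> = (real s - real (e q)) * real p ^ q"
  have z: "real (ZZ p n (RR p n i0 q x) i m) = real (ZZ p n x i m) + (if i = i0 then \<delta> else 0)"
    if i: "i < n" for i
  proof (cases "i = i0")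
    case True
    have "zp_of_digits p (e(q := s)) m + e q * p ^ q = zp_of_digits p e m + s * p ^ q"
      by (rule zod_upd_gt) fact
    then have "real (zp_of_digits p (e(q := s)) m) + real (e q) * real p ^ q = real (zp_of_digits p e m) + real s * real p ^ q"
      by (metis of_nat_add of_nat_mult of_nat_power)
    then show ?thesis using True i by (simp add: zz_i RR_i e_def s_def \<delta>_def algebra_simps)
  next
    case False then show ?thesis using i by (simp add: zz_i RR_i)
  qed
  have sum: "(\<Sum>i<n. real (y i m) * real (ZZ p n (RR p n i0 q x) i m)) =
        (\<Sum>i<n. real (y i m) * real (ZZ p n x i m)) + real (y i m) * \<delta>" if "i = i0" for i
  proof -
    have "(\<Sum>i<n. real (y i m) * real (ZZ p n (RR p n i0 q x) i m)) =
        (\<Sum>i<n. real (y i m) * real (ZZ p n x i m) + (if i = i0 then real (y i0 m) * \<delta> else 0))"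
      by (intro sum.cong refl) (simp add: z distrib_left)
    also have "\<dots> = (\<Sum>i<n. real (y i m) * real (ZZ p n x i m)) + (\<Sum>i<n. (if i = i0 then real (y i0 m) * \<delta> else 0))"
      by (rule sum.distrib)
    also have "(\<Sum>i<n. (if i = i0 then real (y i0 m) * \<delta> else 0)) = real (y i0 m) * \<delta>"
      using i0 by (simp add: sum.delta)
    finally show ?thesis using that by simp
  qed
  have pm: "real p ^ m = real p ^ v * real p ^ q * real p"
  proof -
    have "real p ^ m = real p ^ (v + q + 1)" using vq by simp
    then show ?thesis by (simp only: power_add power_one_right)
  qed
  obtain k :: int where k: "2 * pi * (real (y i0 m) * \<delta>) / real p ^ m = 2 * pi * real aa / real p + 2 * pi * real_of_int k"
  proof (cases "e q + 1 < p")
    case True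
    then have "\<delta> = real p ^ q" by (simp add: \<delta>_def s_def)
    then have "2 * pi * (real (y i0 m) * \<delta>) / real p ^ m = 2 * pi * real aa / real p + 2 * pi * real_of_int 0"
      using ya pm p0 by (simp add: field_simps)
    then show ?thesis using that by blast
  next
    case False
    have "e q < p" using good i0 by (simp add: e_def)
    then have "e q = p - 1" using False by simp
    then have "s = 0" using p0 by (simp add: s_def)
    then have dl: "\<delta> = (1 - real p) * real p ^ q" using \<open>e q = p - 1\<close> p0 by (simp add: \<delta>_def of_nat_diff)
    have ya': "real (y i0 m) = real p ^ v * real aa" using ya by simp
    have "2 * pi * (real (y i0 m) * \<delta>) / real p ^ m =
        2 * pi * ((real p ^ v * real aa) * ((1 - real p) * real p ^ q)) / (real p ^ v * real p ^ q * real p)"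
      unfolding ya' dl pm ..
    also have "\<dots> = 2 * pi * real aa / real p + 2 * pi * real_of_int (- int aa)"
      using p0 by (simp add: field_simps)
    finally have "2 * pi * (real (y i0 m) * \<delta>) / real p ^ m = 2 * pi * real aa / real p + 2 * pi * real_of_int (- int aa)" .
    then show ?thesis using that by blast
  qed
  define A where "A = 2 * pi * (\<Sum>i<n. real (y i m) * real (ZZ p n x i m)) / real p ^ m"
  define Bt where "Bt = 2 * pi * real aa / real p"
  have "Psi_rep p n m y (ZZ p n (RR p n i0 q x)) = cis (2 * pi * (\<Sum>i<n. real (y i m) * real (ZZ p n (RR p n i0 q x) i m)) / real p ^ m)"
    by (rule psi_alt[OF p0])
  also have "2 * pi * (\<Sum>i<n. real (y i m) * real (ZZ p n (RR p n i0 q x) i m)) / real p ^ m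
      = A + 2 * pi * (real (y i0 m) * \<delta>) / real p ^ m"
    unfolding sum[OF refl] A_def by (simp add: add_divide_distrib distrib_left)
  also have "\<dots> = (A + Bt) + 2 * pi * real_of_int k"
    unfolding k Bt_def by (simp only: add.assoc)
  also have "cis \<dots> = cis (A + Bt)" by (rule cis_int_period)
  also have "\<dots> = cis A * cis Bt" by (rule cis_mult[symmetric])
  also have "cis A = Psi_rep p n m y (ZZ p n x)" unfolding A_def by (rule psi_alt[OF p0, symmetric])
  finally show ?thesis by (simp add: Bt_def)
qed

lemma good_Zp:
  assumes "\<forall>i<n. \<forall>j. x i j < p"
  shows "\<forall>i<n. ZZ p n x i \<in> Zp p"
  using assms zod_Zp by (simp add: zz_i)

lemma good_RR:
  assumes "p > 0" "\<forall>i<n. \<forall>j. x i j < p"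
  shows "\<forall>i<n. \<forall>j. RR p n i0 q x i j < p"
  using assms by (auto simp: RR_i)

lemma g_inv:
  fixes p n d M J q i0 :: nat
  assumes p1: "p > 1"
    and coeffs: "\<forall>\<alpha>\<in>S. c \<alpha> \<in> Zp p"
    and homog: "\<forall>\<alpha>\<in>S. (\<Sum>i<n. \<alpha> i) = d" and d1: "d \<ge> 1"
    and lowerA: "\<forall>xi. (\<forall>i<n. xi i \<in> Zp p) \<and> (\<exists>i<n. padic_abs p (xi i) = 1) \<longrightarrow>
        padic_abs p (zp_poly_eval p n S c xi) \<ge> 1 / real p ^ M"
    and good: "\<forall>i<n. \<forall>j. x i j < p"
    and notB: "\<exists>i<n. \<exists>j<J. x i j \<noteq> 0" and Jq: "J + M \<le> q"
  shows "padic_abs p (zp_poly_eval p n S c (ZZ p n (RR p n i0 q x))) = padic_abs p (zp_poly_eval p n S c (ZZ p n x))"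
proof -
  obtain i1 where i1: "i1 < n" "\<exists>j<J. x i1 j \<noteq> 0" using notB by blast
  have "ZZ p n x i1 J \<noteq> 0" using i1 p1 by (simp add: zz_i zod_zero)
  show ?thesis
  proof (rule key[OF p1 coeffs homog d1 lowerA])
    show "\<forall>i<n. ZZ p n x i \<in> Zp p" using good_Zp[OF good] .
    show "\<forall>i<n. ZZ p n (RR p n i0 q x) i \<in> Zp p" using good_Zp good_RR p1 good by simp
    show "\<forall>i<n. \<forall>k. ZZ p n (RR p n i0 q x) i k mod p ^ q = ZZ p n x i k mod p ^ q"
      by (simp add: zz_i RR_i zod_upd_mod)
    show "i1 < n" by fact
    show "ZZ p n x i1 J \<noteq> 0" by fact
    show "J + M \<le> q" by fact
  qed
qed

lemma ball_digits:
  assumes p1: "p > 1"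
    and coeffs: "\<forall>\<alpha>\<in>S. c \<alpha> \<in> Zp p"
    and homog: "\<forall>\<alpha>\<in>S. (\<Sum>i<n. \<alpha> i) = d" and d1: "d \<ge> 1"
    and good: "\<forall>i<n. \<forall>j. x i j < p"
    and B: "\<forall>i<n. \<forall>j<J. x i j = 0"
  shows "padic_abs p (zp_poly_eval p n S c (ZZ p n x)) \<le> 1 / real p ^ (d * J)"
  by (rule ball_bound[OF p1 coeffs homog d1 good_Zp[OF good]]) (use B p1 in \<open>simp add: zz_i zod_zero\<close>)

theorem lemma4:
  fixes p n d M :: nat and \<beta> :: real
    and S :: "(nat \<Rightarrow> nat) set" and c :: "(nat \<Rightarrow> nat) \<Rightarrow> nat \<Rightarrow> nat"
  assumes "prime p" and "n \<ge> 1" and "\<beta> > 0"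
    and "finite S"
    and coeffs: "\<forall>\<alpha>\<in>S. c \<alpha> \<in> Zp p"
    and vars: "\<forall>\<alpha>\<in>S. \<forall>i\<ge>n. \<alpha> i = 0"
    and homog: "\<forall>\<alpha>\<in>S. (\<Sum>i<n. \<alpha> i) = d"
    and "d \<ge> 1"
    and elliptic: "\<forall>xi. (\<forall>i<n. xi i \<in> Zp p) \<longrightarrow>
        (zp_poly_eval p n S c xi = (\<lambda>k. 0) \<longleftrightarrow> (\<forall>i<n. xi i = (\<lambda>k. 0)))"
    and "M > 0"
    and lowerA: "\<forall>xi. (\<forall>i<n. xi i \<in> Zp p) \<and> (\<exists>i<n. padic_abs p (xi i) = 1) \<longrightarrow>
        padic_abs p (zp_poly_eval p n S c xi) \<ge> 1 / real p ^ M"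
  shows "\<exists>R>0. \<exists>C>0. \<forall>m y t. (\<forall>i<n. y i \<in> Zp p) \<and> qp_norm_rep p n m y \<ge> R \<and> t > 0 \<and>
      real p powr ((M + 1) * d * \<beta>) * t * qp_norm_rep p n m y powr (- d * \<beta>) \<le> 1 \<longrightarrow>
      cmod (Z0 p n S c \<beta> m y t) \<le> C * t * qp_norm_rep p n m y powr (- d * \<beta> - n)"
proof -
  have p1: "p > 1" using \<open>prime p\<close> prime_gt_1_nat by blast
  have p0: "p > 0" using p1 by simp
  have rp1: "real p > 1" using p1 by simp
  define R where "R = real p ^ (M + 2)"
  define C where "C = real p powr ((M + 1) * (d * \<beta> + n))"
  have Rpos: "R > 0" using p0 by (simp add: R_def)
  have Cpos: "C > 0" using p0 by (simp add: C_def)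
  have main: "cmod (Z0 p n S c \<beta> m y t) \<le> C * t * qp_norm_rep p n m y powr (- d * \<beta> - n)"
    if yZ: "\<forall>i<n. y i \<in> Zp p" and Rle: "qp_norm_rep p n m y \<ge> R" and t0: "t > 0" for m y t
  proof -
    have fin: "finite ((\<lambda>i. padic_abs p (y i)) ` {..<n})" by simp
    have ne: "(\<lambda>i. padic_abs p (y i)) ` {..<n} \<noteq> {}" using \<open>n \<ge> 1\<close> by (auto simp: lessThan_empty_iff)
    obtain i0 where i0: "i0 < n" "zp_norm p n y = padic_abs p (y i0)"
      using Max_in[OF fin ne] unfolding zp_norm_def by auto
    have "qp_norm_rep p n m y > 0" using Rle Rpos by simp
    then have ap: "padic_abs p (y i0) > 0" using i0 p0 unfolding qp_norm_rep_def
      by (simp add: zero_less_mult_iff)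
    then have ynz: "y i0 \<noteq> (\<lambda>k. 0)" by (auto simp: padic_abs_def)
    define v where "v = padic_val p (y i0)"
    have av: "padic_abs p (y i0) = 1 / real p ^ v" using ynz by (simp add: padic_abs_def v_def)
    have norm_eq: "qp_norm_rep p n m y = real p ^ m / real p ^ v"
      using i0 av by (simp add: qp_norm_rep_def)
    have "real p ^ (M + 2) * real p ^ v \<le> real p ^ m"
      using Rle p0 unfolding norm_eq R_def by (simp add: field_simps)
    then have "real p ^ (M + 2 + v) \<le> real p ^ m" by (simp add: power_add)
    then have mv: "M + 2 + v \<le> m" using power_le_imp_le_exp[OF rp1] by blast
    define L where "L = m - v"
    define J where "J = L - M - 1"
    define q where "q = L - 1"
    have J1: "J \<ge> 1" using mv by (simp add: J_def L_def)
    have qJ: "q = J + M" using mv by (simp add: J_def L_def q_def)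
    have qm: "q < m" using mv by (simp add: q_def L_def)
    have vq: "v + q + 1 = m" using mv by (simp add: q_def L_def)
    have LJ: "L = J + M + 1" using mv by (simp add: J_def L_def)
    have normL: "qp_norm_rep p n m y = real p ^ L"
      unfolding norm_eq L_def using mv p0 by (simp add: power_diff)
    have yi0: "y i0 \<in> Zp p" using yZ i0 by simp
    obtain k0 where "y i0 k0 \<noteq> 0" using ynz by auto
    then have "k0 \<noteq> 0" using zp_zero0[OF yi0] by metis
    then have ex: "\<exists>k. y i0 (Suc k) \<noteq> 0" using \<open>y i0 k0 \<noteq> 0\<close> not0_implies_Suc by metis
    have ySv: "y i0 (Suc v) \<noteq> 0" unfolding v_def padic_val_def by (rule LeastI_ex[OF ex])
    have yv: "y i0 v = 0"
    proof (cases v)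
      case 0 then show ?thesis using zp_zero0[OF yi0] by simp
    next
      case (Suc k)
      have "k < v" using Suc by simp
      then have "\<not> y i0 (Suc k) \<noteq> 0" unfolding v_def padic_val_def by (rule not_less_Least)
      then show ?thesis using Suc by simp
    qed
    have "p ^ v dvd y i0 m" using zp_dvd_from[OF yi0 yv] mv by simp
    then obtain aa where ya: "y i0 m = p ^ v * aa" by blast
    have naa: "\<not> p dvd aa"
    proof
      assume "p dvd aa"
      then have "p ^ Suc v dvd y i0 m" using ya by (auto simp: mult_dvd_mono)
      moreover have "y i0 (Suc v) = y i0 m mod p ^ Suc v" using zp_mod_le[OF yi0, of "Suc v" m] mv by simp
      ultimately show False using ySv by simp
    qed
    define \<zeta> where "\<zeta> = cis (2 * pi * real aa / real p)"
    have z1: "\<zeta> \<noteq> 1"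
    proof
      assume "\<zeta> = 1"
      then have "exp (\<i> * complex_of_real (2 * pi * real aa / real p)) = 1"
        by (simp add: \<zeta>_def cis_conv_exp)
      then obtain k :: int where k: "2 * pi * real aa / real p = of_int (2 * k) * pi"
        by (auto simp: exp_eq_1)
      then have "real aa = real p * of_int k" using p0 by (simp add: field_simps)
      then have "int aa = int p * k" by (metis of_int_eq_iff of_int_mult of_int_of_nat_eq)
      then have "int p dvd int aa" by simp
      then show False using naa by simp
    qed
    define F where "F = (\<lambda>xi. Psi_rep p n m y xi * complex_of_real (exp (- t * padic_abs p (zp_poly_eval p n S c xi) powr \<beta>)))"
    have Z0eq: "Z0 p n S c \<beta> m y t = integral\<^sup>L (zpn_haar p n) F" by (simp add: Z0_def F_def)
    define PP where "PP = PiM {..<n} (\<lambda>_. PiM UNIV (\<lambda>_::nat. count_space (UNIV::nat set)))"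
    have hd: "zpn_haar p n = distr (Dn p n) PP (ZZ p n)" using haar_distr[OF p0] by (simp add: PP_def)
    have ZZm: "ZZ p n \<in> measurable (Dn p n) PP" using ZZ_meas by (simp add: PP_def)
    have bound_pos: "C * t * qp_norm_rep p n m y powr (- d * \<beta> - n) > 0" using Cpos t0 normL p0 by simp
    show ?thesis
    proof (cases "integrable (zpn_haar p n) F")
      case False
      then show ?thesis using bound_pos Z0eq by (simp add: not_integrable_integral_eq)
    next
      case True
      have Fm: "F \<in> borel_measurable PP" using borel_measurable_integrable[OF True] hd by simp
      define Ps where "Ps x = Psi_rep p n m y (ZZ p n x)" for x
      define g where "g x = exp (- t * padic_abs p (zp_poly_eval p n S c (ZZ p n x)) powr \<beta>)" for x
      define G where "G x = F (ZZ p n x)" for x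
      have G_eq: "G x = Ps x * complex_of_real (g x)" for x by (simp add: G_def F_def Ps_def g_def)
      have Gint: "integrable (Dn p n) G" using True unfolding hd G_def by (simp add: integrable_distr_eq[OF ZZm Fm])
      have Z0G: "Z0 p n S c \<beta> m y t = integral\<^sup>L (Dn p n) G"
        unfolding Z0eq hd G_def by (rule integral_distr[OF ZZm Fm])
      interpret Dp: prob_space "Dn p n" using prob_Dn[OF p0] .
      have Psm: "Ps \<in> borel_measurable (Dn p n)" unfolding Ps_def by (rule psi_meas[OF p0])
      have Psint: "integrable (Dn p n) Ps"
        by (rule Dp.integrable_const_bound[where B=1]) (auto simp: Ps_def Psi_rep_def Psm)
      define B where "B = BB p n J"
      have Bs: "B \<in> sets (Dn p n)" unfolding B_def by (rule BB_sets)
      define H2 where "H2 x = indicator B x *\<^sub>R (G x - Ps x)" for x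
      define H1 where "H1 x = G x - H2 x" for x
      have H2int: "integrable (Dn p n) H2" unfolding H2_def using Bs Gint Psint by (intro integrable_mult_indicator) auto
      have H1int: "integrable (Dn p n) H1" unfolding H1_def using Gint H2int by auto
      have split: "integral\<^sup>L (Dn p n) G = integral\<^sup>L (Dn p n) H1 + integral\<^sup>L (Dn p n) H2"
        unfolding H1_def using Gint H2int by simp
      have H1_eq: "H1 x = Ps x * (if x \<in> B then 1 else complex_of_real (g x))" for x
        by (simp add: H1_def H2_def G_eq indicator_def algebra_simps)
      have ae: "AE x in Dn p n. H1 (RR p n i0 q x) = \<zeta> * H1 x"
        using AE_digits[OF p0, of n] AE_space
      proof eventually_elim
        case (elim x)
        have good: "\<forall>i<n. \<forall>j. x i j < p" using elim by simp
        have RRsp: "RR p n i0 q x \<in> space (Dn p n)" using measurable_space[OF RR_meas elim(2)] .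
        have same: "RR p n i0 q x i j = x i j" if "i < n" "j < J" for i j
          using that qJ by (simp add: RR_i)
        have RRB: "RR p n i0 q x \<in> B \<longleftrightarrow> x \<in> B"
          unfolding B_def BB_iff[OF RRsp] BB_iff[OF elim(2)] using same by simp
        have Psh: "Ps (RR p n i0 q x) = Ps x * \<zeta>"
          unfolding Ps_def \<zeta>_def by (rule psi_shift[of p i0 n q m x y v aa, OF p0 i0(1) qm good ya vq])
        have gsh: "g (RR p n i0 q x) = g x" if "x \<notin> B"
        proof -
          have "\<exists>i<n. \<exists>j<J. x i j \<noteq> 0" using that unfolding B_def BB_iff[OF elim(2)] by auto
          then show ?thesis unfolding g_def
            using g_inv[OF p1 coeffs homog \<open>d \<ge> 1\<close> lowerA good _ _, of J q i0] qJ by simp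
        qed
        show ?case
          by (cases "x \<in> B") (simp_all add: H1_eq RRB Psh gsh)
      qed
      have H1m: "H1 \<in> borel_measurable (Dn p n)" using H1int by (rule borel_measurable_integrable)
      have "integral\<^sup>L (Dn p n) H1 = integral\<^sup>L (distr (Dn p n) (Dn p n) (RR p n i0 q)) H1"
        by (simp add: distr_RR[OF p0])
      also have "\<dots> = integral\<^sup>L (Dn p n) (\<lambda>x. H1 (RR p n i0 q x))"
        by (rule integral_distr[OF RR_meas H1m])
      also have "\<dots> = integral\<^sup>L (Dn p n) (\<lambda>x. \<zeta> * H1 x)"
        by (rule integral_cong_AE) (use ae H1m measurable_compose[OF RR_meas H1m] in auto)
      also have "\<dots> = \<zeta> * integral\<^sup>L (Dn p n) H1" by simp
      finally have "(1 - \<zeta>) * integral\<^sup>L (Dn p n) H1 = 0" by (simp add: algebra_simps)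
      then have I1: "integral\<^sup>L (Dn p n) H1 = 0" using z1 by simp
      define K where "K = t * real p powr (- (real d * real J * \<beta>))"
      have K0: "K \<ge> 0" using t0 by (simp add: K_def)
      have nb: "AE x in Dn p n. norm (H2 x) \<le> K * indicator B x"
        using AE_digits[OF p0, of n] AE_space
      proof eventually_elim
        case (elim x)
        show ?case
        proof (cases "x \<in> B")
          case False then show ?thesis by (simp add: H2_def)
        next
          case True
          have good: "\<forall>i<n. \<forall>j. x i j < p" using elim by simp
          have xB: "\<forall>i<n. \<forall>j<J. x i j = 0" using True BB_iff[OF elim(2)] by (simp add: B_def)
          define a where "a = padic_abs p (zp_poly_eval p n S c (ZZ p n x))"
          have a0: "a \<ge> 0" by (simp add: a_def padic_abs_def)
          have ab: "a \<le> 1 / real p ^ (d * J)"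
            unfolding a_def by (rule ball_digits[OF p1 coeffs homog \<open>d \<ge> 1\<close> good xB])
          have "a powr \<beta> \<le> (1 / real p ^ (d * J)) powr \<beta>"
            using a0 ab \<open>\<beta> > 0\<close> by (intro powr_mono2) auto
          also have "(1 / real p ^ (d * J)) powr \<beta> = real p powr (- (real d * real J * \<beta>))"
            using p0 by (simp add: powr_realpow[symmetric] powr_minus_divide[symmetric] powr_powr)
          finally have apb: "t * a powr \<beta> \<le> K" unfolding K_def using t0 by simp
          have "norm (H2 x) = norm (Ps x * complex_of_real (g x - 1))"
            using True by (simp add: H2_def G_eq algebra_simps)
          also have "\<dots> = norm (complex_of_real (g x - 1))" by (simp add: Ps_def Psi_rep_def norm_mult del: of_real_diff)
          also have "\<dots> = \<bar>g x - 1\<bar>" by (rule norm_of_real)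
          also have "\<dots> = 1 - g x"
            unfolding g_def a_def[symmetric] using t0 a0 by simp
          also have "\<dots> \<le> t * a powr \<beta>"
            using exp_ge_add_one_self[of "- t * a powr \<beta>"] unfolding g_def a_def[symmetric] by simp
          also have "\<dots> \<le> K" by fact
          finally show ?thesis using True by simp
        qed
      qed
      have Bint: "integrable (Dn p n) (indicator B :: _ \<Rightarrow> real)"
        using Dp.emeasure_finite[of B] Bs by (intro integrable_real_indicator) (auto simp: less_top[symmetric])
      have "norm (integral\<^sup>L (Dn p n) H2) \<le> integral\<^sup>L (Dn p n) (\<lambda>x. norm (H2 x))"
        by (rule integral_norm_bound)
      also have "\<dots> \<le> integral\<^sup>L (Dn p n) (\<lambda>x. K * indicator B x)"
        by (rule integral_mono_AE') (use nb K0 Bint in auto)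
      also have "\<dots> = K * measure (Dn p n) B"
        using Bs by (simp add: Int_absorb2 sets.sets_into_space)
      also have "measure (Dn p n) B = (1 / real p) ^ (n * J)"
        unfolding B_def measure_def emeasure_BB[OF p0] by simp
      finally have H2b: "norm (integral\<^sup>L (Dn p n) H2) \<le> K * (1 / real p) ^ (n * J)" .
      have "K * (1 / real p) ^ (n * J) = C * t * qp_norm_rep p n m y powr (- d * \<beta> - n)"
      proof -
        have "(1 / real p) ^ (n * J) = 1 / real p ^ (n * J)" by (simp add: power_divide)
        also have "\<dots> = 1 / real p powr (real (n * J))" using p0 by (simp only: powr_realpow of_nat_0_less_iff)
        also have "\<dots> = real p powr (- real (n * J))" by (simp only: powr_minus_divide)
        finally have e1: "(1 / real p) ^ (n * J) = real p powr (- real (n * J))" .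
        have e2: "(real p ^ L) powr e = real p powr (real L * e)" for e
          using p0 by (simp add: powr_realpow[symmetric] powr_powr)
        have ex: "- (real d * real J * \<beta>) + - real (n * J) =
            real (M + 1) * (real d * \<beta> + real n) + real L * (real_of_int (- int d) * \<beta> - real n)"
          unfolding LJ by (simp add: algebra_simps)
        have LJr: "real L = real J + real M + 1" using LJ by simp
        show ?thesis
          unfolding K_def C_def normL e1 e2 mult.assoc
          apply (simp add: powr_add[symmetric])
          apply (intro disjI2 arg_cong[where f="\<lambda>e. real p powr e"])
          apply (simp add: LJr algebra_simps)
          done
      qed
      then show ?thesis using H2b Z0G split I1 by simp
    qed
  qed
  show ?thesis
    using Rpos Cpos main by blast
qed


end
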